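(* Let $K$ be a field, $S=K[x_1,\ldots,x_n]$ with $\mathfrak{m}=(x_1,\ldots,x_n)$, and let $I\subseteq S$ be a monomial ideal generated in degree $d$. Suppose that for every positive integer $m$ and every monomial $u\in(I^m:\mathfrak{m})\setminus I^m$ one has $\deg(u)=md-1$. Then $\mathrm{Soc}(I)$ is isomorphic, as an $\mathcal{F}(I)$-module, to an ideal of $\mathcal{F}(I)$. In particular, if $\mathrm{Soc}(I)\neq0$, then $\mathrm{rank}\,\mathrm{Soc}(I)=1$.
   Context: $\mathcal{F}(I)=\bigoplus_{m\ge0}I^m/\mathfrak{m}I^m$ is the fiber cone of $I$ and $\mathrm{Soc}(I)=\bigoplus_{m\ge0}(I^m:\mathfrak{m})/I^m$, a graded $\mathcal{F}(I)$-module via multiplication. *)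

theory Defs
  imports "HOL-Library.Poly_Mapping" "HOL-Algebra.Algebra"
begin

type_synonym ('v, 'k) mpoly = "('v \<Rightarrow>\<^sub>0 nat) \<Rightarrow>\<^sub>0 'k"

definition monom :: "('v \<Rightarrow>\<^sub>0 nat) \<Rightarrow> ('v, 'k::field) mpoly" where
  "monom a = Poly_Mapping.single a 1"

definition mdeg :: "('v \<Rightarrow>\<^sub>0 nat) \<Rightarrow> nat" where
  "mdeg a = (\<Sum>v\<in>Poly_Mapping.keys a. Poly_Mapping.lookup a v)"

definition is_ideal :: "'a::comm_ring_1 set \<Rightarrow> bool" where
  "is_ideal J \<longleftrightarrow> 0 \<in> J \<and> (\<forall>x\<in>J. \<forall>y\<in>J. x + y \<in> J) \<and> (\<forall>r. \<forall>x\<in>J. r * x \<in> J)"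

definition ideal_gen :: "'a::comm_ring_1 set \<Rightarrow> 'a set" where
  "ideal_gen G = \<Inter>{J. G \<subseteq> J \<and> is_ideal J}"

definition ideal_prod :: "'a::comm_ring_1 set \<Rightarrow> 'a set \<Rightarrow> 'a set" where
  "ideal_prod A B = ideal_gen ((\<lambda>(a, b). a * b) ` (A \<times> B))"

fun ideal_pow :: "'a::comm_ring_1 set \<Rightarrow> nat \<Rightarrow> 'a set" where
  "ideal_pow A 0 = UNIV"
| "ideal_pow A (Suc m) = ideal_prod A (ideal_pow A m)"

definition ideal_colon :: "'a::comm_ring_1 set \<Rightarrow> 'a set \<Rightarrow> 'a set" where
  "ideal_colon A B = {f. \<forall>b\<in>B. f * b \<in> A}"

definition max_ideal :: "('v, 'k::field) mpoly set" where
  "max_ideal = ideal_gen (range (\<lambda>v. monom (Poly_Mapping.single v 1)))"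

definition monomial_ideal_gen_in_degree :: "('v, 'k::field) mpoly set \<Rightarrow> nat \<Rightarrow> bool" where
  "monomial_ideal_gen_in_degree I d \<longleftrightarrow>
     (\<exists>G. (\<forall>a\<in>G. mdeg a = d) \<and> I = ideal_gen (monom ` G))"

definition pcoset :: "'a::comm_ring_1 set \<Rightarrow> 'a \<Rightarrow> 'a set" where
  "pcoset N f = (\<lambda>x. f + x) ` N"

definition cadd :: "'a::comm_ring_1 set \<Rightarrow> 'a set \<Rightarrow> 'a set" where
  "cadd U W = (\<lambda>(x, y). x + y) ` (U \<times> W)"

definition rep :: "'a set \<Rightarrow> 'a" where
  "rep U = (SOME x. x \<in> U)"

text \<open>Elements of the graded module \<Oplus>_m A_m/N_m: families of cosets, almost all zero.\<close>
definition graded_carrier :: "(nat \<Rightarrow> 'a::comm_ring_1 set) \<Rightarrow> (nat \<Rightarrow> 'a set) \<Rightarrow> (nat \<Rightarrow> 'a set) set" where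
  "graded_carrier A N = {x. (\<forall>m. x m \<in> pcoset (N m) ` A m) \<and> finite {m. x m \<noteq> N m}}"

definition graded_mult :: "(nat \<Rightarrow> 'a::comm_ring_1 set) \<Rightarrow> (nat \<Rightarrow> 'a set) \<Rightarrow> (nat \<Rightarrow> 'a set) \<Rightarrow> nat \<Rightarrow> 'a set" where
  "graded_mult N x y = (\<lambda>m. pcoset (N m) (\<Sum>i\<le>m. rep (x i) * rep (y (m - i))))"

definition fiber_cone :: "('v, 'k::field) mpoly set \<Rightarrow> (nat \<Rightarrow> ('v, 'k) mpoly set) ring" where
  "fiber_cone I =
    (let A = (\<lambda>m. ideal_pow I m); N = (\<lambda>m. ideal_prod max_ideal (ideal_pow I m)) in
     \<lparr> carrier = graded_carrier A N,
       monoid.mult = graded_mult N,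
       one = (\<lambda>m. if m = 0 then pcoset (N 0) 1 else N m),
       ring.zero = N,
       ring.add = (\<lambda>x y m. cadd (x m) (y m)) \<rparr>)"

text \<open>Soc(I) as an F(I)-module (the ring fields mult/one of the record are irrelevant).\<close>
definition socle_module :: "('v, 'k::field) mpoly set \<Rightarrow>
    (nat \<Rightarrow> ('v, 'k) mpoly set, nat \<Rightarrow> ('v, 'k) mpoly set) module" where
  "socle_module I =
    (let A = (\<lambda>m. ideal_colon (ideal_pow I m) max_ideal); N = (\<lambda>m. ideal_pow I m) in
     \<lparr> carrier = graded_carrier A N,
       monoid.mult = graded_mult N,
       one = (\<lambda>m. pcoset (N m) (if m = 0 then 1 else 0)),
       ring.zero = N,
       ring.add = (\<lambda>x y m. cadd (x m) (y m)),
       module.smult = graded_mult N \<rparr>)"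

definition iso_to_ideal :: "('a, 'c) ring_scheme \<Rightarrow> ('a, 'b, 'd) module_scheme \<Rightarrow> bool" where
  "iso_to_ideal R M \<longleftrightarrow>
     (\<exists>J \<phi>. ideal J R \<and> bij_betw \<phi> (carrier M) J
        \<and> (\<forall>x\<in>carrier M. \<forall>y\<in>carrier M. \<phi> (x \<oplus>\<^bsub>M\<^esub> y) = \<phi> x \<oplus>\<^bsub>R\<^esub> \<phi> y)
        \<and> (\<forall>r\<in>carrier R. \<forall>x\<in>carrier M. \<phi> (r \<odot>\<^bsub>M\<^esub> x) = r \<otimes>\<^bsub>R\<^esub> \<phi> x))"

definition lin_indep :: "('a, 'c) ring_scheme \<Rightarrow> ('a, 'b, 'd) module_scheme \<Rightarrow> 'b set \<Rightarrow> bool" where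
  "lin_indep R M B \<longleftrightarrow> finite B \<and> B \<subseteq> carrier M \<and>
     (\<forall>c \<in> B \<rightarrow> carrier R.
        finsum M (\<lambda>x. c x \<odot>\<^bsub>M\<^esub> x) B = \<zero>\<^bsub>M\<^esub> \<longrightarrow> (\<forall>x\<in>B. c x = \<zero>\<^bsub>R\<^esub>))"

definition module_rank :: "('a, 'c) ring_scheme \<Rightarrow> ('a, 'b, 'd) module_scheme \<Rightarrow> nat" where
  "module_rank R M = (GREATEST k. \<exists>B. lin_indep R M B \<and> card B = k)"

end

theory Submission
  imports Defs "HOL-Computational_Algebra.Formal_Power_Series"
begin

section \<open>Ideal basics\<close>

lemma is_idealD:
  assumes "is_ideal J"
  shows "0 \<in> J" "\<And>x y. x \<in> J \<Longrightarrow> y \<in> J \<Longrightarrow> x + y \<in> J" "\<And>r x. x \<in> J \<Longrightarrow> r * x \<in> J"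
  using assms unfolding is_ideal_def by auto

lemma ideal_mult_right: "is_ideal J \<Longrightarrow> x \<in> J \<Longrightarrow> x * r \<in> J"
  by (metis is_idealD(3) mult.commute)

lemma ideal_uminus: "is_ideal J \<Longrightarrow> x \<in> J \<Longrightarrow> - x \<in> J"
  by (metis is_idealD(3) mult_minus1)

lemma ideal_diff: "is_ideal J \<Longrightarrow> x \<in> J \<Longrightarrow> y \<in> J \<Longrightarrow> x - y \<in> J"
  by (metis diff_conv_add_uminus ideal_uminus is_idealD(2))

lemma ideal_sum: "is_ideal J \<Longrightarrow> (\<And>i. i \<in> S \<Longrightarrow> f i \<in> J) \<Longrightarrow> sum f S \<in> J"
  by (induction S rule: infinite_finite_induct) (auto simp: is_idealD)

lemma is_ideal_UNIV: "is_ideal UNIV"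
  by (simp add: is_ideal_def)

lemma is_ideal_Inter: "(\<And>J. J \<in> \<J> \<Longrightarrow> is_ideal J) \<Longrightarrow> is_ideal (\<Inter>\<J>)"
  by (simp add: is_ideal_def)

lemma is_ideal_ideal_gen: "is_ideal (ideal_gen G)"
  unfolding ideal_gen_def by (rule is_ideal_Inter) auto

lemma ideal_gen_sub: "G \<subseteq> ideal_gen G"
  unfolding ideal_gen_def by auto

lemma ideal_gen_least: "G \<subseteq> J \<Longrightarrow> is_ideal J \<Longrightarrow> ideal_gen G \<subseteq> J"
  unfolding ideal_gen_def by auto

lemma is_ideal_prod: "is_ideal (ideal_prod A B)"
  unfolding ideal_prod_def by (rule is_ideal_ideal_gen)

lemma prod_mem: "a \<in> A \<Longrightarrow> b \<in> B \<Longrightarrow> a * b \<in> ideal_prod A B"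
  unfolding ideal_prod_def using ideal_gen_sub by fastforce

lemma prod_least: "(\<And>a b. a \<in> A \<Longrightarrow> b \<in> B \<Longrightarrow> a * b \<in> J) \<Longrightarrow> is_ideal J \<Longrightarrow> ideal_prod A B \<subseteq> J"
  unfolding ideal_prod_def by (rule ideal_gen_least) auto

lemma is_ideal_pow: "is_ideal (ideal_pow A m)"
  by (cases m) (auto simp: is_ideal_UNIV is_ideal_prod)

lemma is_ideal_colon: "is_ideal A \<Longrightarrow> is_ideal (ideal_colon A B)"
  unfolding is_ideal_def ideal_colon_def by (auto simp: distrib_right mult.assoc)

lemma is_ideal_max: "is_ideal max_ideal"
  unfolding max_ideal_def by (rule is_ideal_ideal_gen)

lemma prod_mult_gen:
  assumes "a \<in> ideal_prod P B" "\<And>x. x \<in> B \<Longrightarrow> x * b \<in> D"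
  shows "a * b \<in> ideal_prod P D"
proof -
  have "ideal_prod P B \<subseteq> {a. a * b \<in> ideal_prod P D}"
  proof (rule prod_least)
    fix p x assume "p \<in> P" "x \<in> B"
    then show "p * x \<in> {a. a * b \<in> ideal_prod P D}"
      using assms(2) prod_mem by (fastforce simp: mult.assoc)
  next
    show "is_ideal {a. a * b \<in> ideal_prod P D}"
      using is_ideal_prod[of P D] unfolding is_ideal_def by (auto simp: distrib_right mult.assoc)
  qed
  then show ?thesis using assms(1) by auto
qed

lemma pow_mult: "a \<in> ideal_pow I i \<Longrightarrow> b \<in> ideal_pow I j \<Longrightarrow> a * b \<in> ideal_pow I (i + j)"
proof (induction i arbitrary: a b)
  case 0
  then show ?case using is_idealD(3)[OF is_ideal_pow] by simp
next
  case (Suc i)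
  have "a * b \<in> ideal_prod I (ideal_pow I (i + j))"
  proof -
    have "ideal_prod I (ideal_pow I i) \<subseteq> {a. a * b \<in> ideal_prod I (ideal_pow I (i + j))}"
    proof (rule prod_least)
      fix p x assume "p \<in> I" "x \<in> ideal_pow I i"
      then show "p * x \<in> {a. a * b \<in> ideal_prod I (ideal_pow I (i + j))}"
        using Suc prod_mem by (fastforce simp: mult.assoc)
    next
      show "is_ideal {a. a * b \<in> ideal_prod I (ideal_pow I (i + j))}"
        using is_ideal_prod[of I "ideal_pow I (i + j)"] unfolding is_ideal_def
        by (auto simp: distrib_right mult.assoc)
    qed
    then show ?thesis using Suc.prems by auto
  qed
  then show ?case by simp
qed

lemma mI_mult:
  "a \<in> ideal_prod P (ideal_pow I i) \<Longrightarrow> b \<in> ideal_pow I j \<Longrightarrow> a * b \<in> ideal_prod P (ideal_pow I (i + j))"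
  by (rule prod_mult_gen) (auto intro: pow_mult)

lemma mI_sub: "ideal_prod P (ideal_pow I m) \<subseteq> ideal_pow I m"
  by (rule prod_least) (auto intro: is_ideal_pow is_idealD(3))

lemma pow_sub_colon: "ideal_pow I m \<subseteq> ideal_colon (ideal_pow I m) B"
  unfolding ideal_colon_def using ideal_mult_right[OF is_ideal_pow] by blast

lemma colon_mult:
  "a \<in> ideal_pow I i \<Longrightarrow> x \<in> ideal_colon (ideal_pow I j) B \<Longrightarrow> a * x \<in> ideal_colon (ideal_pow I (i + j)) B"
  unfolding ideal_colon_def using pow_mult by (fastforce simp: mult.assoc)

lemma mI_colon_mult:
  assumes "a \<in> ideal_prod B (ideal_pow I i)" "x \<in> ideal_colon (ideal_pow I j) B"
  shows "a * x \<in> ideal_pow I (i + j)"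
proof -
  have "ideal_prod B (ideal_pow I i) \<subseteq> {a. a * x \<in> ideal_pow I (i + j)}"
  proof (rule prod_least)
    fix p q assume "p \<in> B" "q \<in> ideal_pow I i"
    then have "q * (x * p) \<in> ideal_pow I (i + j)"
      using assms(2) pow_mult unfolding ideal_colon_def by blast
    then show "p * q \<in> {a. a * x \<in> ideal_pow I (i + j)}"
      by (simp add: ac_simps)
  next
    show "is_ideal {a. a * x \<in> ideal_pow I (i + j)}"
      using is_ideal_pow[of I "i + j"] unfolding is_ideal_def by (auto simp: distrib_right mult.assoc)
  qed
  then show ?thesis using assms(1) by auto
qed

lemma monom_add: "(monom (a + b) :: ('v, 'k::field) mpoly) = monom a * monom b"
  by (simp add: monom_def mult_single)

lemma keys_monom [simp]: "Poly_Mapping.keys (monom a :: ('v, 'k::field) mpoly) = {a}"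
  by (simp add: monom_def)

lemma mdeg_UNIV: "mdeg (a :: 'v::finite \<Rightarrow>\<^sub>0 nat) = (\<Sum>v\<in>UNIV. Poly_Mapping.lookup a v)"
  unfolding mdeg_def by (rule sum.mono_neutral_left) (auto simp: in_keys_iff)

lemma mdeg_add: "mdeg (a + b :: 'v::finite \<Rightarrow>\<^sub>0 nat) = mdeg a + mdeg b"
  by (simp add: mdeg_UNIV lookup_add sum.distrib)

lemma mdeg_single: "mdeg (Poly_Mapping.single (v::'v::finite) 1) = 1"
  by (simp add: mdeg_def)

lemma lookup_mult_monom:
  "Poly_Mapping.lookup (p * monom a :: ('v, 'k::field) mpoly) (c + a) = Poly_Mapping.lookup p c"
proof -
  have "Poly_Mapping.lookup (p * monom a) (c + a) =
        (\<Sum>l. Poly_Mapping.lookup p l * (\<Sum>q. Poly_Mapping.lookup (monom a) q when c + a = l + q))"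
    by (rule lookup_mult)
  also have "\<dots> = (\<Sum>l. Poly_Mapping.lookup p l when l = c)"
  proof (rule Sum_any.cong)
    fix l
    have "(\<Sum>q. Poly_Mapping.lookup (monom a) q when c + a = l + q) = (\<Sum>q. (1::'k) when q = a \<and> l = c)"
      by (rule Sum_any.cong) (auto simp: monom_def lookup_single when_def)
    also have "\<dots> = (1 when l = c)"
      by (cases "l = c") (auto simp: when_def)
    finally show "Poly_Mapping.lookup p l * (\<Sum>q. Poly_Mapping.lookup (monom a) q when c + a = l + q) =
        (Poly_Mapping.lookup p l when l = c)" by (simp add: when_def)
  qed
  also have "\<dots> = Poly_Mapping.lookup p c"
    by simp
  finally show ?thesis .
qed

lemma keys_mult_monom:
  "c \<in> Poly_Mapping.keys (p :: ('v, 'k::field) mpoly) \<Longrightarrow> c + a \<in> Poly_Mapping.keys (p * monom a)"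
  by (simp add: in_keys_iff lookup_mult_monom)

definition Mset :: "('v, 'k::field) mpoly set \<Rightarrow> ('v, 'k) mpoly set" where
  "Mset J = {p. \<forall>c\<in>Poly_Mapping.keys p. monom c \<in> J}"

lemma is_ideal_Mset:
  fixes J :: "('v, 'k::field) mpoly set"
  assumes "is_ideal J"
  shows "is_ideal (Mset J)"
  unfolding is_ideal_def Mset_def
proof (intro conjI ballI allI)
  show "0 \<in> {p. \<forall>c\<in>Poly_Mapping.keys p. monom c \<in> J}" by simp
next
  fix x y :: "('v, 'k) mpoly" assume x: "x \<in> {p. \<forall>c\<in>Poly_Mapping.keys p. monom c \<in> J}" and y: "y \<in> {p. \<forall>c\<in>Poly_Mapping.keys p. monom c \<in> J}"
  then show "x + y \<in> {p. \<forall>c\<in>Poly_Mapping.keys p. monom c \<in> J}"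
    using keys_add[of x y] by auto
next
  fix r x :: "('v, 'k) mpoly" assume x: "x \<in> {p. \<forall>c\<in>Poly_Mapping.keys p. monom c \<in> J}"
  show "r * x \<in> {p. \<forall>c\<in>Poly_Mapping.keys p. monom c \<in> J}"
  proof (safe)
    fix c assume "c \<in> Poly_Mapping.keys (r * x)"
    then obtain a b where "c = a + b" "b \<in> Poly_Mapping.keys x"
      using keys_mult[of r x] by auto
    then show "monom c \<in> J"
      using x is_idealD(3)[OF assms] by (auto simp: monom_add)
  qed
qed

lemma monom_sum:
  "(p :: ('v, 'k::field) mpoly) = (\<Sum>c\<in>Poly_Mapping.keys p. Poly_Mapping.single 0 (Poly_Mapping.lookup p c) * monom c)"
proof (rule poly_mapping_eqI)
  fix k
  have "Poly_Mapping.lookup (\<Sum>c\<in>Poly_Mapping.keys p. Poly_Mapping.single 0 (Poly_Mapping.lookup p c) * monom c) k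
      = (\<Sum>c\<in>Poly_Mapping.keys p. Poly_Mapping.lookup p c when c = k)"
    by (simp add: lookup_sum monom_def mult_single lookup_single when_def eq_commute)
  also have "\<dots> = Poly_Mapping.lookup p k"
    by (cases "k \<in> Poly_Mapping.keys p") (auto simp: when_def in_keys_iff)
  finally show "Poly_Mapping.lookup p k = Poly_Mapping.lookup (\<Sum>c\<in>Poly_Mapping.keys p. Poly_Mapping.single 0 (Poly_Mapping.lookup p c) * monom c) k" ..
qed

lemma Mset_sub:
  fixes J :: "('v, 'k::field) mpoly set"
  assumes "is_ideal J" "p \<in> Mset J"
  shows "p \<in> J"
proof -
  have "(\<Sum>c\<in>Poly_Mapping.keys p. Poly_Mapping.single 0 (Poly_Mapping.lookup p c) * monom c) \<in> J"
    using assms by (intro ideal_sum) (auto simp: Mset_def intro: is_idealD(3))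
  then show ?thesis using monom_sum[of p] by simp
qed

lemma M_gen: "ideal_gen (monom ` G :: ('v, 'k::field) mpoly set) \<subseteq> Mset (ideal_gen (monom ` G))"
proof (rule ideal_gen_least)
  show "monom ` G \<subseteq> Mset (ideal_gen (monom ` G :: ('v, 'k::field) mpoly set))"
    by (auto simp: Mset_def intro: ideal_gen_sub[THEN subsetD])
qed (rule is_ideal_Mset[OF is_ideal_ideal_gen])

lemma M_prod:
  fixes A B :: "('v, 'k::field) mpoly set"
  assumes "A \<subseteq> Mset A" "B \<subseteq> Mset B"
  shows "ideal_prod A B \<subseteq> Mset (ideal_prod A B)"
proof (rule prod_least)
  fix a b assume ab: "a \<in> A" "b \<in> B"
  show "a * b \<in> Mset (ideal_prod A B)"
    unfolding Mset_def
  proof safe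
    fix c assume "c \<in> Poly_Mapping.keys (a * b)"
    then obtain c1 c2 where "c = c1 + c2" "c1 \<in> Poly_Mapping.keys a" "c2 \<in> Poly_Mapping.keys b"
      using keys_mult[of a b] by auto
    then show "monom c \<in> ideal_prod A B"
      using assms ab by (auto simp: Mset_def monom_add intro!: prod_mem)
  qed
qed (rule is_ideal_Mset[OF is_ideal_prod])

lemma M_UNIV: "UNIV \<subseteq> Mset (UNIV :: ('v, 'k::field) mpoly set)"
  by (auto simp: Mset_def)

lemma M_pow:
  fixes I :: "('v, 'k::field) mpoly set"
  assumes "I \<subseteq> Mset I"
  shows "ideal_pow I m \<subseteq> Mset (ideal_pow I m)"
  by (induction m) (auto simp: M_UNIV intro!: M_prod[OF assms, simplified])

lemma M_max: "max_ideal \<subseteq> Mset (max_ideal :: ('v, 'k::field) mpoly set)"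
  unfolding max_ideal_def using M_gen[of "range (\<lambda>v. Poly_Mapping.single v 1)"]
  by (simp add: image_image)

definition Pset :: "nat \<Rightarrow> ('v::finite, 'k::field) mpoly set" where
  "Pset k = {p. \<forall>c\<in>Poly_Mapping.keys p. k \<le> mdeg c}"

lemma is_ideal_Pset: "is_ideal (Pset k :: ('v::finite, 'k::field) mpoly set)"
  unfolding is_ideal_def Pset_def
proof (intro conjI ballI allI)
  show "0 \<in> {p :: ('v, 'k) mpoly. \<forall>c\<in>Poly_Mapping.keys p. k \<le> mdeg c}" by simp
next
  fix x y :: "('v, 'k) mpoly" assume "x \<in> {p. \<forall>c\<in>Poly_Mapping.keys p. k \<le> mdeg c}" "y \<in> {p. \<forall>c\<in>Poly_Mapping.keys p. k \<le> mdeg c}"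
  then show "x + y \<in> {p. \<forall>c\<in>Poly_Mapping.keys p. k \<le> mdeg c}"
    using keys_add[of x y] by auto
next
  fix r x :: "('v, 'k) mpoly" assume x: "x \<in> {p. \<forall>c\<in>Poly_Mapping.keys p. k \<le> mdeg c}"
  show "r * x \<in> {p. \<forall>c\<in>Poly_Mapping.keys p. k \<le> mdeg c}"
  proof safe
    fix c assume "c \<in> Poly_Mapping.keys (r * x)"
    then obtain a b where "c = a + b" "b \<in> Poly_Mapping.keys x"
      using keys_mult[of r x] by auto
    then show "k \<le> mdeg c" using x by (auto simp: mdeg_add)
  qed
qed

lemma P_prod:
  fixes A B :: "('v::finite, 'k::field) mpoly set"
  assumes "A \<subseteq> Pset i" "B \<subseteq> Pset j"
  shows "ideal_prod A B \<subseteq> Pset (i + j)"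
proof (rule prod_least)
  fix a b assume ab: "a \<in> A" "b \<in> B"
  show "a * b \<in> Pset (i + j)"
    unfolding Pset_def
  proof safe
    fix c assume "c \<in> Poly_Mapping.keys (a * b)"
    then obtain c1 c2 where "c = c1 + c2" "c1 \<in> Poly_Mapping.keys a" "c2 \<in> Poly_Mapping.keys b"
      using keys_mult[of a b] by auto
    then show "i + j \<le> mdeg c"
      using assms ab by (force simp: Pset_def mdeg_add intro: add_mono)
  qed
qed (rule is_ideal_Pset)

lemma P_gen:
  assumes "\<forall>g\<in>G. mdeg g = d"
  shows "ideal_gen (monom ` G :: ('v::finite, 'k::field) mpoly set) \<subseteq> Pset d"
  by (rule ideal_gen_least) (use assms in \<open>auto simp: Pset_def intro: is_ideal_Pset[unfolded Pset_def]\<close>)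

lemma P_max: "max_ideal \<subseteq> (Pset 1 :: ('v::finite, 'k::field) mpoly set)"
  unfolding max_ideal_def
proof (rule ideal_gen_least)
  show "range (\<lambda>v. monom (Poly_Mapping.single v 1)) \<subseteq> (Pset 1 :: ('v::finite, 'k::field) mpoly set)"
    by (auto simp: Pset_def monom_def mdeg_def)
qed (rule is_ideal_Pset)

lemma P_pow:
  fixes I :: "('v::finite, 'k::field) mpoly set"
  assumes "I \<subseteq> Pset d"
  shows "ideal_pow I m \<subseteq> Pset (m * d)"
proof (induction m)
  case 0
  then show ?case by (auto simp: Pset_def)
next
  case (Suc m)
  then show ?case using P_prod[OF assms Suc] by simp
qed

lemma mdeg_pos_max:
  assumes "0 < mdeg (c :: 'v::finite \<Rightarrow>\<^sub>0 nat)"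
  shows "(monom c :: ('v, 'k::field) mpoly) \<in> max_ideal"
proof -
  obtain v where v: "0 < Poly_Mapping.lookup c v"
    using assms unfolding mdeg_def by (metis in_keys_iff not_gr0 sum.neutral)
  have "c = (c - Poly_Mapping.single v 1) + Poly_Mapping.single v 1"
    by (rule poly_mapping_eqI) (use v in \<open>auto simp: lookup_add lookup_minus lookup_single when_def\<close>)
  then have "(monom c :: ('v, 'k::field) mpoly) = monom (c - Poly_Mapping.single v 1) * monom (Poly_Mapping.single v 1)"
    by (metis monom_add)
  moreover have "(monom (Poly_Mapping.single v 1) :: ('v, 'k::field) mpoly) \<in> max_ideal"
    unfolding max_ideal_def by (rule ideal_gen_sub[THEN subsetD]) auto
  ultimately show ?thesis using is_idealD(3)[OF is_ideal_max] by simp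
qed

definition Qset :: "('v::finite, 'k::field) mpoly set \<Rightarrow> nat \<Rightarrow> ('v, 'k) mpoly set" where
  "Qset J k = {p. p \<in> J \<and> (\<forall>c\<in>Poly_Mapping.keys p. k < mdeg c \<longrightarrow> monom c \<in> ideal_prod max_ideal J)}"

lemma is_ideal_Qset:
  fixes J :: "('v::finite, 'k::field) mpoly set"
  assumes J: "is_ideal J" "J \<subseteq> Mset J"
  shows "is_ideal (Qset J k)"
  unfolding is_ideal_def
proof (intro conjI ballI allI)
  show "0 \<in> Qset J k" using is_idealD(1)[OF J(1)] by (simp add: Qset_def)
next
  fix x y assume "x \<in> Qset J k" "y \<in> Qset J k"
  then show "x + y \<in> Qset J k"
    using keys_add[of x y] is_idealD(2)[OF J(1), of x y] unfolding Qset_def by blast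
next
  fix r x assume x: "x \<in> Qset J k"
  show "r * x \<in> Qset J k"
    unfolding Qset_def
  proof (safe)
    show "r * x \<in> J" using x is_idealD(3)[OF J(1), of x r] by (simp add: Qset_def)
  next
    fix c assume "c \<in> Poly_Mapping.keys (r * x)" and ck: "k < mdeg c"
    then obtain c1 c2 where c: "c = c1 + c2" "c2 \<in> Poly_Mapping.keys x"
      using keys_mult[of r x] by auto
    show "monom c \<in> ideal_prod max_ideal J"
    proof (cases "k < mdeg c2")
      case True
      then have "monom c2 \<in> ideal_prod max_ideal J" using x c by (auto simp: Qset_def)
      then show ?thesis using c by (simp add: monom_add is_idealD(3)[OF is_ideal_prod])
    next
      case False
      then have "0 < mdeg c1" using ck c by (simp add: mdeg_add)
      then have "monom c1 \<in> max_ideal" by (rule mdeg_pos_max)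
      moreover have "monom c2 \<in> J" using x c J by (auto simp: Qset_def Mset_def)
      ultimately show ?thesis using c prod_mem[of "monom c1" max_ideal "monom c2" J] by (simp add: monom_add)
    qed
  qed
qed

lemma Q_gen:
  assumes "\<forall>g\<in>G. mdeg g = d"
  shows "ideal_gen (monom ` G :: ('v::finite, 'k::field) mpoly set) \<subseteq> Qset (ideal_gen (monom ` G)) d"
proof (rule ideal_gen_least)
  show "monom ` G \<subseteq> Qset (ideal_gen (monom ` G :: ('v::finite, 'k::field) mpoly set)) d"
    using assms by (auto simp: Qset_def intro: ideal_gen_sub[THEN subsetD])
qed (rule is_ideal_Qset[OF is_ideal_ideal_gen M_gen])

lemma Q_pow:
  fixes I :: "('v::finite, 'k::field) mpoly set"
  assumes QI: "I \<subseteq> Qset I d" and MI: "I \<subseteq> Mset I" and PI: "I \<subseteq> Pset d"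
  shows "ideal_pow I i \<subseteq> Qset (ideal_pow I i) (i * d)"
proof (induction i)
  case 0
  have "monom c \<in> ideal_prod max_ideal UNIV" if "0 < mdeg c" for c :: "'v \<Rightarrow>\<^sub>0 nat"
    using prod_mem[OF mdeg_pos_max[OF that], of 1 UNIV] by simp
  then show ?case by (auto simp: Qset_def)
next
  case (Suc i)
  have "ideal_prod I (ideal_pow I i) \<subseteq> Qset (ideal_prod I (ideal_pow I i)) (Suc i * d)"
  proof (rule prod_least)
    fix p q assume p: "p \<in> I" and q: "q \<in> ideal_pow I i"
    show "p * q \<in> Qset (ideal_prod I (ideal_pow I i)) (Suc i * d)"
      unfolding Qset_def
    proof safe
      show "p * q \<in> ideal_prod I (ideal_pow I i)" using p q by (rule prod_mem)
    next
      fix c assume "c \<in> Poly_Mapping.keys (p * q)" and ck: "Suc i * d < mdeg c"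
      then obtain c1 c2 where c: "c = c1 + c2" "c1 \<in> Poly_Mapping.keys p" "c2 \<in> Poly_Mapping.keys q"
        using keys_mult[of p q] by auto
      have m1: "monom c1 \<in> I" using MI p c by (auto simp: Mset_def)
      have m2: "monom c2 \<in> ideal_pow I i" using M_pow[OF MI] q c by (auto simp: Mset_def)
      have d1: "d \<le> mdeg c1" using PI p c by (auto simp: Pset_def)
      have d2: "i * d \<le> mdeg c2" using P_pow[OF PI] q c by (auto simp: Pset_def)
      show "monom c \<in> ideal_prod max_ideal (ideal_prod I (ideal_pow I i))"
      proof (cases "i * d < mdeg c2")
        case True
        then have "monom c2 \<in> ideal_prod max_ideal (ideal_pow I i)"
          using Suc.IH q c by (auto simp: Qset_def)
        then have "monom c2 * monom c1 \<in> ideal_prod max_ideal (ideal_prod I (ideal_pow I i))"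
          by (rule prod_mult_gen) (metis m1 mult.commute prod_mem)
        then show ?thesis using c by (simp add: monom_add mult.commute)
      next
        case False
        then have "d < mdeg c1" using ck c d2 by (simp add: mdeg_add)
        then have "monom c1 \<in> ideal_prod max_ideal I" using QI p c by (auto simp: Qset_def)
        then have "monom c1 * monom c2 \<in> ideal_prod max_ideal (ideal_prod I (ideal_pow I i))"
          by (rule prod_mult_gen) (use m2 in \<open>auto intro: prod_mem\<close>)
        then show ?thesis using c by (simp add: monom_add)
      qed
    qed
  qed (rule is_ideal_Qset[OF is_ideal_prod M_prod[OF MI M_pow[OF MI]]])
  then show ?case by simp
qed

lemma colon_monom:
  fixes J :: "('v::finite, 'k::field) mpoly set"
  assumes J: "is_ideal J" "J \<subseteq> Mset J" and p: "p \<in> ideal_colon J max_ideal" and c: "c \<in> Poly_Mapping.keys p"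
  shows "monom c \<in> ideal_colon J max_ideal"
proof -
  have "max_ideal \<subseteq> {b. monom c * b \<in> J}"
    unfolding max_ideal_def
  proof (rule ideal_gen_least)
    show "range (\<lambda>v. monom (Poly_Mapping.single v 1)) \<subseteq> {b. monom c * b \<in> J}"
    proof safe
      fix v
      have "monom (Poly_Mapping.single v 1) \<in> (max_ideal :: ('v, 'k) mpoly set)"
        unfolding max_ideal_def by (rule ideal_gen_sub[THEN subsetD]) auto
      then have "p * monom (Poly_Mapping.single v 1) \<in> J"
        using p unfolding ideal_colon_def by blast
      moreover have "c + Poly_Mapping.single v 1 \<in> Poly_Mapping.keys (p * monom (Poly_Mapping.single v 1))"
        using c by (rule keys_mult_monom)
      ultimately have "monom (c + Poly_Mapping.single v 1) \<in> J"
        using J(2) unfolding Mset_def by blast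
      then show "monom c * monom (Poly_Mapping.single v 1) \<in> J"
        by (simp only: monom_add)
    qed
  next
    show "is_ideal {b. monom c * b \<in> J}"
      unfolding is_ideal_def using is_idealD[OF J(1)] by (simp add: distrib_left mult.left_commute)
  qed
  then show ?thesis by (auto simp: ideal_colon_def)
qed

locale mono_setup =
  fixes I :: "('v::finite, 'k::field) mpoly set" and G and d :: nat
  assumes I_def: "I = ideal_gen (monom ` G)" and G_deg: "\<forall>g\<in>G. mdeg g = d"
    and hyp: "\<forall>m::nat. m > 0 \<longrightarrow> (\<forall>a. monom a \<in> ideal_colon (ideal_pow I m) max_ideal - ideal_pow I m
            \<longrightarrow> int (mdeg a) = int m * int d - 1)"
begin

lemma MI: "I \<subseteq> Mset I" using M_gen I_def by simp
lemma PI: "I \<subseteq> Pset d" using P_gen[OF G_deg] I_def by simp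
lemma QI: "I \<subseteq> Qset I d" using Q_gen[OF G_deg] I_def by simp

lemma Mpow: "ideal_pow I m \<subseteq> Mset (ideal_pow I m)" by (rule M_pow[OF MI])
lemma Ppow: "ideal_pow I m \<subseteq> Pset (m * d)" by (rule P_pow[OF PI])
lemma PmI: "ideal_prod max_ideal (ideal_pow I m) \<subseteq> Pset (1 + m * d)"
  by (rule P_prod[OF P_max Ppow])

lemma key_inj:
  assumes h: "h \<in> ideal_colon (ideal_pow I m) max_ideal"
    and hX: "h * monom (Poly_Mapping.single v 1) \<in> ideal_prod max_ideal (ideal_pow I m)"
  shows "h \<in> ideal_pow I m"
proof (cases "m = 0")
  case True then show ?thesis by simp
next
  case False
  show ?thesis
  proof (rule Mset_sub[OF is_ideal_pow], unfold Mset_def, safe)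
    fix c assume c: "c \<in> Poly_Mapping.keys h"
    show "monom c \<in> ideal_pow I m"
    proof (rule ccontr)
      assume nc: "monom c \<notin> ideal_pow I m"
      have "monom c \<in> ideal_colon (ideal_pow I m) max_ideal"
        by (rule colon_monom[OF is_ideal_pow Mpow h c])
      then have deg: "int (mdeg c) = int m * int d - 1"
        using hyp False nc by auto
      have "c + Poly_Mapping.single v 1 \<in> Poly_Mapping.keys (h * monom (Poly_Mapping.single v 1))"
        using c by (rule keys_mult_monom)
      then have "1 + m * d \<le> mdeg (c + Poly_Mapping.single v 1)"
        using PmI hX unfolding Pset_def by blast
      moreover have "mdeg (c + Poly_Mapping.single v 1) = mdeg c + 1"
        by (simp only: mdeg_add mdeg_single)
      ultimately have "int m * int d \<le> int (mdeg c)"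
        by (metis add_le_cancel_right of_nat_mono of_nat_mult add.commute)
      then show False using deg by simp
    qed
  qed
qed

lemma key_rank:
  assumes m: "0 < m" and a: "monom a \<in> ideal_colon (ideal_pow I m) max_ideal" "monom a \<notin> ideal_pow I m"
    and f: "f \<in> ideal_pow I i" and fa: "f * monom a \<in> ideal_pow I (i + m)"
  shows "f \<in> ideal_prod max_ideal (ideal_pow I i)"
proof (rule Mset_sub[OF is_ideal_prod], unfold Mset_def, safe)
  fix b assume b: "b \<in> Poly_Mapping.keys f"
  have deg: "int (mdeg a) = int m * int d - 1"
    using hyp m a by auto
  have mb: "monom b \<in> ideal_pow I i" using Mpow f b by (auto simp: Mset_def)
  have db: "i * d \<le> mdeg b" using Ppow f b by (auto simp: Pset_def)
  show "monom b \<in> ideal_prod max_ideal (ideal_pow I i)"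
  proof (cases "i * d < mdeg b")
    case True
    have "monom b \<in> Qset (ideal_pow I i) (i * d)" using Q_pow[OF QI MI PI] mb by blast
    then show ?thesis using True by (simp add: Qset_def)
  next
    case False
    have "b + a \<in> Poly_Mapping.keys (f * monom a)" using b by (rule keys_mult_monom)
    then have "(i + m) * d \<le> mdeg (b + a)" using Ppow fa unfolding Pset_def by blast
    then have "i * d + m * d \<le> mdeg b + mdeg a" by (simp add: mdeg_add algebra_simps)
    then have "m * d \<le> mdeg a" using False db by linarith
    then have "int m * int d \<le> int (mdeg a)" by (metis of_nat_mono of_nat_mult)
    then show ?thesis using deg by simp
  qed
qed

end

definition gF :: "(nat \<Rightarrow> 'a set) \<Rightarrow> 'a::comm_ring_1 fps" where
  "gF x = Abs_fps (\<lambda>i. rep (x i))"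

definition gcl :: "(nat \<Rightarrow> 'a::comm_ring_1 set) \<Rightarrow> 'a fps \<Rightarrow> nat \<Rightarrow> 'a set" where
  "gcl N f = (\<lambda>m. pcoset (N m) (fps_nth f m))"

definition adm :: "(nat \<Rightarrow> 'a::comm_ring_1 set) \<Rightarrow> 'a fps \<Rightarrow> bool" where
  "adm A f \<longleftrightarrow> (\<forall>m. fps_nth f m \<in> A m)"

definition fsupp :: "(nat \<Rightarrow> 'a::comm_ring_1 set) \<Rightarrow> 'a fps \<Rightarrow> bool" where
  "fsupp N f \<longleftrightarrow> finite {m. fps_nth f m \<notin> N m}"

definition eqv :: "(nat \<Rightarrow> 'a::comm_ring_1 set) \<Rightarrow> 'a fps \<Rightarrow> 'a fps \<Rightarrow> bool" where
  "eqv N f g \<longleftrightarrow> (\<forall>m. fps_nth f m - fps_nth g m \<in> N m)"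

lemma gF_nth [simp]: "fps_nth (gF x) i = rep (x i)"
  by (simp add: gF_def)

lemma gcl_apply: "gcl N f m = pcoset (N m) (fps_nth f m)"
  by (simp add: gcl_def)

section \<open>Cosets\<close>

lemma pcoset_mem: "is_ideal N \<Longrightarrow> a \<in> pcoset N a"
  unfolding pcoset_def using is_idealD(1)[of N] by (metis add.right_neutral image_eqI)

lemma pcoset_eq_iff:
  assumes N: "is_ideal N"
  shows "pcoset N a = pcoset N b \<longleftrightarrow> a - b \<in> N"
proof
  assume "pcoset N a = pcoset N b"
  then have "a \<in> pcoset N b" using pcoset_mem[OF N] by metis
  then obtain n where "n \<in> N" "a = b + n" by (auto simp: pcoset_def)
  then show "a - b \<in> N" by simp
next
  assume ab: "a - b \<in> N"
  show "pcoset N a = pcoset N b"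
  proof (auto simp: pcoset_def)
    fix n assume "n \<in> N"
    then have "(a - b) + n \<in> N" using ab is_idealD(2)[OF N] by blast
    moreover have "a + n = b + ((a - b) + n)" by simp
    ultimately show "a + n \<in> (+) b ` N" by blast
  next
    fix n assume "n \<in> N"
    then have "n - (a - b) \<in> N" using ab ideal_diff[OF N] by blast
    moreover have "b + n = a + (n - (a - b))" by simp
    ultimately show "b + n \<in> (+) a ` N" by blast
  qed
qed

lemma rep_pcoset:
  assumes N: "is_ideal N"
  shows "rep (pcoset N a) - a \<in> N"
proof -
  have "rep (pcoset N a) \<in> pcoset N a"
    unfolding rep_def using pcoset_mem[OF N] by (rule someI)
  then show ?thesis by (auto simp: pcoset_def)
qed

lemma cadd_pcoset:
  assumes N: "is_ideal N"
  shows "cadd (pcoset N a) (pcoset N b) = pcoset N (a + b)"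
proof (auto simp: cadd_def pcoset_def)
  fix n1 n2 assume "n1 \<in> N" "n2 \<in> N"
  then have "n1 + n2 \<in> N" using is_idealD(2)[OF N] by blast
  moreover have "a + n1 + (b + n2) = a + b + (n1 + n2)" by simp
  ultimately show "a + n1 + (b + n2) \<in> (+) (a + b) ` N" by blast
next
  fix n assume n: "n \<in> N"
  have "a + b + n = (a + n) + (b + 0)" by simp
  moreover have "(a + n, b + 0) \<in> (+) a ` N \<times> (+) b ` N"
    using n is_idealD(1)[OF N] by blast
  ultimately show "a + b + n \<in> (\<lambda>(x, y). x + y) ` ((+) a ` N \<times> (+) b ` N)"
    by (metis (no_types, lifting) case_prod_conv image_eqI)
qed

lemma pcoset_zero:
  assumes N: "is_ideal N"
  shows "pcoset N 0 = N"
  by (simp add: pcoset_def)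

lemma pcoset_eq_N:
  assumes N: "is_ideal N"
  shows "pcoset N a = N \<longleftrightarrow> a \<in> N"
  using pcoset_eq_iff[OF N, of a 0] pcoset_zero[OF N] by simp

section \<open>Gradings\<close>

locale grading =
  fixes A N :: "nat \<Rightarrow> 'a::comm_ring_1 set"
  assumes A_ideal: "\<And>m. is_ideal (A m)" and N_ideal: "\<And>m. is_ideal (N m)"
    and N_sub: "\<And>m. N m \<subseteq> A m"
begin

lemma gcl_eq_iff: "gcl N f = gcl N g \<longleftrightarrow> eqv N f g"
  unfolding gcl_def eqv_def fun_eq_iff using pcoset_eq_iff[OF N_ideal] by blast

lemma gcl_N_iff: "gcl N f m = N m \<longleftrightarrow> fps_nth f m \<in> N m"
  unfolding gcl_def using pcoset_eq_N[OF N_ideal] by blast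

lemma gcl_in: "adm A f \<Longrightarrow> fsupp N f \<Longrightarrow> gcl N f \<in> graded_carrier A N"
  unfolding graded_carrier_def adm_def fsupp_def
  by (auto simp: gcl_N_iff) (auto simp: gcl_def)

lemma gF_gcl: "adm A f \<Longrightarrow> adm A (gF (gcl N f)) \<and> eqv N (gF (gcl N f)) f"
proof -
  assume f: "adm A f"
  have e: "rep (pcoset (N m) (fps_nth f m)) - fps_nth f m \<in> N m" for m
    by (rule rep_pcoset[OF N_ideal])
  have "rep (pcoset (N m) (fps_nth f m)) \<in> A m" for m
  proof -
    have "(rep (pcoset (N m) (fps_nth f m)) - fps_nth f m) + fps_nth f m \<in> A m"
      using e[of m] N_sub f is_idealD(2)[OF A_ideal] unfolding adm_def by blast
    then show ?thesis by simp
  qed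
  then show ?thesis using e by (simp add: adm_def eqv_def gcl_def)
qed

lemma carrier_rep:
  assumes "x \<in> graded_carrier A N"
  obtains f where "adm A f" "fsupp N f" "x = gcl N f"
proof -
  from assms have x: "\<And>m. x m \<in> pcoset (N m) ` A m" and fin: "finite {m. x m \<noteq> N m}"
    by (auto simp: graded_carrier_def)
  have "\<forall>m. \<exists>a. a \<in> A m \<and> x m = pcoset (N m) a" using x by blast
  then have "\<exists>g. \<forall>m. g m \<in> A m \<and> x m = pcoset (N m) (g m)" by (rule choice)
  then obtain g where g: "\<And>m. g m \<in> A m" "\<And>m. x m = pcoset (N m) (g m)"
    by blast
  define f where "f = Abs_fps g"
  have af: "adm A f" using g by (simp add: adm_def f_def)
  have xe: "x = gcl N f" using g by (simp add: gcl_def f_def fun_eq_iff)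
  have "{m. fps_nth f m \<notin> N m} = {m. x m \<noteq> N m}"
    using xe gcl_N_iff by auto
  then have "fsupp N f" using fin by (simp add: fsupp_def)
  with af xe that show ?thesis by blast
qed

lemma eqv_refl: "eqv N f f"
  by (simp add: eqv_def is_idealD(1)[OF N_ideal])

lemma add_gcl: "(\<lambda>m. cadd (gcl N f m) (gcl N g m)) = gcl N (f + g)"
  by (simp add: gcl_def cadd_pcoset[OF N_ideal] fun_eq_iff)

lemma adm_add: "adm A f \<Longrightarrow> adm A g \<Longrightarrow> adm A (f + g)"
  by (simp add: adm_def is_idealD(2)[OF A_ideal])

lemma adm_uminus: "adm A f \<Longrightarrow> adm A (- f)"
  by (simp add: adm_def ideal_uminus[OF A_ideal])

lemma adm_0: "adm A 0"
  by (simp add: adm_def is_idealD(1)[OF A_ideal])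

lemma fsupp_add: "fsupp N f \<Longrightarrow> fsupp N g \<Longrightarrow> fsupp N (f + g)"
proof -
  assume "fsupp N f" "fsupp N g"
  moreover have "{m. fps_nth (f + g) m \<notin> N m} \<subseteq> {m. fps_nth f m \<notin> N m} \<union> {m. fps_nth g m \<notin> N m}"
    using is_idealD(2)[OF N_ideal] by auto
  ultimately show ?thesis unfolding fsupp_def by (meson finite_Un finite_subset)
qed

lemma fsupp_uminus: "fsupp N f \<Longrightarrow> fsupp N (- f)"
proof -
  have "{m. fps_nth (- f) m \<notin> N m} = {m. fps_nth f m \<notin> N m}"
    using ideal_uminus[OF N_ideal] by (auto, metis minus_minus)
  then show "fsupp N f \<Longrightarrow> fsupp N (- f)" by (simp add: fsupp_def)
qed

lemma fsupp_0: "fsupp N 0"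
  by (simp add: fsupp_def is_idealD(1)[OF N_ideal])

lemma gcl_0: "gcl N 0 = N"
  by (simp add: gcl_def pcoset_zero[OF N_ideal] fun_eq_iff)

end

lemma fsupp_bound:
  assumes "fsupp N f"
  obtains M where "\<And>i. M < i \<Longrightarrow> fps_nth f i \<in> N i"
proof -
  obtain M where "\<And>i. i \<in> {m. fps_nth f m \<notin> N m} \<Longrightarrow> i \<le> M"
    using assms unfolding fsupp_def by (metis finite_nat_set_iff_bounded_le)
  then show ?thesis using that by (meson not_le mem_Collect_eq)
qed

locale grading3 = g1: grading A1 N1 + g2: grading A2 N2 + g3: grading A3 N3
  for A1 N1 A2 N2 A3 N3 :: "nat \<Rightarrow> 'a::comm_ring_1 set" +
  assumes AA: "\<And>i j a b. a \<in> A1 i \<Longrightarrow> b \<in> A2 j \<Longrightarrow> a * b \<in> A3 (i + j)"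
    and AN: "\<And>i j a b. a \<in> A1 i \<Longrightarrow> b \<in> N2 j \<Longrightarrow> a * b \<in> N3 (i + j)"
    and NA: "\<And>i j a b. a \<in> N1 i \<Longrightarrow> b \<in> A2 j \<Longrightarrow> a * b \<in> N3 (i + j)"
begin

lemma adm_mult: "adm A1 f \<Longrightarrow> adm A2 g \<Longrightarrow> adm A3 (f * g)"
  unfolding adm_def fps_mult_nth
proof (intro allI ideal_sum[OF g3.A_ideal])
  fix m i :: nat assume f: "\<forall>m. fps_nth f m \<in> A1 m" and g: "\<forall>m. fps_nth g m \<in> A2 m" and i: "i \<in> {0..m}"
  then have "fps_nth f i * fps_nth g (m - i) \<in> A3 (i + (m - i))" using AA by blast
  then show "fps_nth f i * fps_nth g (m - i) \<in> A3 m" using i by simp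
qed

lemma eqv_mult:
  assumes "adm A1 f" "adm A1 f'" "adm A2 g" "adm A2 g'" "eqv N1 f f'" "eqv N2 g g'"
  shows "eqv N3 (f * g) (f' * g')"
  unfolding eqv_def
proof
  fix m
  have "fps_nth (f * g) m - fps_nth (f' * g') m =
      (\<Sum>i=0..m. (fps_nth f i - fps_nth f' i) * fps_nth g (m - i) + fps_nth f' i * (fps_nth g (m - i) - fps_nth g' (m - i)))"
    by (simp add: fps_mult_nth sum_subtractf[symmetric] algebra_simps)
  also have "\<dots> \<in> N3 m"
  proof (rule ideal_sum[OF g3.N_ideal])
    fix i assume "i \<in> {0..m}"
    then have im: "i + (m - i) = m" by simp
    have "(fps_nth f i - fps_nth f' i) * fps_nth g (m - i) \<in> N3 (i + (m - i))"
      using assms NA unfolding adm_def eqv_def by blast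
    moreover have "fps_nth f' i * (fps_nth g (m - i) - fps_nth g' (m - i)) \<in> N3 (i + (m - i))"
      using assms AN unfolding adm_def eqv_def by blast
    ultimately show "(fps_nth f i - fps_nth f' i) * fps_nth g (m - i) + fps_nth f' i * (fps_nth g (m - i) - fps_nth g' (m - i)) \<in> N3 m"
      using im is_idealD(2)[OF g3.N_ideal] by metis
  qed
  finally show "fps_nth (f * g) m - fps_nth (f' * g') m \<in> N3 m" .
qed

lemma fsupp_mult:
  assumes "adm A1 f" "adm A2 g" "fsupp N1 f" "fsupp N2 g"
  shows "fsupp N3 (f * g)"
proof -
  obtain M1 where M1: "\<And>i. M1 < i \<Longrightarrow> fps_nth f i \<in> N1 i" using fsupp_bound[OF assms(3)] by blast
  obtain M2 where M2: "\<And>i. M2 < i \<Longrightarrow> fps_nth g i \<in> N2 i" using fsupp_bound[OF assms(4)] by blast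
  have "fps_nth (f * g) m \<in> N3 m" if m: "M1 + M2 < m" for m
    unfolding fps_mult_nth
  proof (rule ideal_sum[OF g3.N_ideal])
    fix i assume "i \<in> {0..m}"
    then have im: "i + (m - i) = m" by simp
    show "fps_nth f i * fps_nth g (m - i) \<in> N3 m"
    proof (cases "M1 < i")
      case True
      then show ?thesis using M1 NA assms(2) im unfolding adm_def by metis
    next
      case False
      then have "M2 < m - i" using m by linarith
      then show ?thesis using M2 AN assms(1) im unfolding adm_def by metis
    qed
  qed
  then have "{m. fps_nth (f * g) m \<notin> N3 m} \<subseteq> {..M1 + M2}" by (auto simp: not_less[symmetric])
  then show ?thesis unfolding fsupp_def by (meson finite_atMost finite_subset)
qed

lemma graded_mult_gF: "graded_mult N3 x y = gcl N3 (gF x * gF y)"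
  by (simp add: graded_mult_def gcl_def fps_mult_nth atMost_atLeast0 fun_eq_iff)

lemma mult_gcl:
  assumes "adm A1 f" "adm A2 g"
  shows "graded_mult N3 (gcl N1 f) (gcl N2 g) = gcl N3 (f * g)"
  unfolding graded_mult_gF g3.gcl_eq_iff
  using g1.gF_gcl[OF assms(1)] g2.gF_gcl[OF assms(2)] assms
  by (intro eqv_mult) auto

end

lemma (in grading) graded_abelian_group:
  fixes R :: "(nat \<Rightarrow> 'a set, 'c) ring_scheme"
  assumes C: "carrier R = graded_carrier A N"
    and P: "\<And>x y. x \<oplus>\<^bsub>R\<^esub> y = (\<lambda>m. cadd (x m) (y m))"
    and Z: "\<zero>\<^bsub>R\<^esub> = N"
  shows "abelian_group R"
proof (rule abelian_groupI)
  fix x y assume "x \<in> carrier R" "y \<in> carrier R"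
  then obtain f g where f: "adm A f" "fsupp N f" "x = gcl N f" and g: "adm A g" "fsupp N g" "y = gcl N g"
    using carrier_rep C by metis
  show "x \<oplus>\<^bsub>R\<^esub> y \<in> carrier R"
    using f g by (simp add: P C add_gcl gcl_in adm_add fsupp_add)
  show "x \<oplus>\<^bsub>R\<^esub> y = y \<oplus>\<^bsub>R\<^esub> x"
    using f g by (simp add: P add_gcl add.commute)
next
  show "\<zero>\<^bsub>R\<^esub> \<in> carrier R"
    using gcl_in[OF adm_0 fsupp_0] by (simp add: Z C gcl_0)
next
  fix x y z assume "x \<in> carrier R" "y \<in> carrier R" "z \<in> carrier R"
  then obtain f g h where "x = gcl N f" "y = gcl N g" "z = gcl N h"
    using carrier_rep C by metis
  then show "x \<oplus>\<^bsub>R\<^esub> y \<oplus>\<^bsub>R\<^esub> z = x \<oplus>\<^bsub>R\<^esub> (y \<oplus>\<^bsub>R\<^esub> z)"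
    by (simp add: P add_gcl add.assoc)
next
  fix x assume "x \<in> carrier R"
  then obtain f where f: "adm A f" "fsupp N f" "x = gcl N f"
    using carrier_rep C by metis
  show "\<zero>\<^bsub>R\<^esub> \<oplus>\<^bsub>R\<^esub> x = x"
    using f add_gcl[of 0 f] by (simp add: P Z gcl_0)
  show "\<exists>y\<in>carrier R. y \<oplus>\<^bsub>R\<^esub> x = \<zero>\<^bsub>R\<^esub>"
  proof (intro bexI)
    show "gcl N (- f) \<oplus>\<^bsub>R\<^esub> x = \<zero>\<^bsub>R\<^esub>"
      using f add_gcl[of "- f" f] by (simp add: P Z gcl_0)
    show "gcl N (- f) \<in> carrier R"
      using f by (simp add: C gcl_in adm_uminus fsupp_uminus)
  qed
qed

locale ggrading = grading A N for A N :: "nat \<Rightarrow> 'a::comm_ring_1 set" +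
  assumes AA: "\<And>i j a b. a \<in> A i \<Longrightarrow> b \<in> A j \<Longrightarrow> a * b \<in> A (i + j)"
    and AN: "\<And>i j a b. a \<in> A i \<Longrightarrow> b \<in> N j \<Longrightarrow> a * b \<in> N (i + j)"
    and one_A: "1 \<in> A 0"
begin

lemma NA: "a \<in> N i \<Longrightarrow> b \<in> A j \<Longrightarrow> a * b \<in> N (i + j)"
  by (metis AN add.commute mult.commute)

sublocale g3: grading3 A N A N A N
  by unfold_locales (auto intro: AA AN NA)

definition RR :: "(nat \<Rightarrow> 'a set) ring" where
  "RR = \<lparr> carrier = graded_carrier A N,
       monoid.mult = graded_mult N,
       one = (\<lambda>m. if m = 0 then pcoset (N 0) 1 else N m),
       ring.zero = N,
       ring.add = (\<lambda>x y m. cadd (x m) (y m)) \<rparr>"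

lemma one_gcl: "(\<lambda>m. if m = 0 then pcoset (N 0) 1 else N m) = gcl N 1"
  by (auto simp: gcl_def fun_eq_iff pcoset_zero[OF N_ideal])

lemma adm_1: "adm A 1"
  using one_A is_idealD(1)[OF A_ideal] by (auto simp: adm_def)

lemma fsupp_1: "fsupp N 1"
proof -
  have "{m. fps_nth (1::'a fps) m \<notin> N m} \<subseteq> {0}"
    using is_idealD(1)[OF N_ideal] by auto
  then show ?thesis unfolding fsupp_def by (meson finite.simps finite_subset)
qed

lemma RR_simps:
  "carrier RR = graded_carrier A N" "\<And>x y. x \<otimes>\<^bsub>RR\<^esub> y = graded_mult N x y"
  "\<one>\<^bsub>RR\<^esub> = gcl N 1" "\<zero>\<^bsub>RR\<^esub> = N" "\<And>x y. x \<oplus>\<^bsub>RR\<^esub> y = (\<lambda>m. cadd (x m) (y m))"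
  by (simp_all add: RR_def one_gcl)

lemma RR_cring: "cring RR"
proof (rule cringI)
  show "abelian_group RR"
    by (rule graded_abelian_group) (simp_all add: RR_simps)
next
  show "comm_monoid RR"
  proof (rule comm_monoidI)
    fix x y assume "x \<in> carrier RR" "y \<in> carrier RR"
    then obtain f g where f: "adm A f" "fsupp N f" "x = gcl N f" and g: "adm A g" "fsupp N g" "y = gcl N g"
      using carrier_rep unfolding RR_simps by metis
    show "x \<otimes>\<^bsub>RR\<^esub> y \<in> carrier RR"
      unfolding RR_simps f(3) g(3) g3.mult_gcl[OF f(1) g(1)]
      by (intro gcl_in g3.adm_mult g3.fsupp_mult f g)
    show "x \<otimes>\<^bsub>RR\<^esub> y = y \<otimes>\<^bsub>RR\<^esub> x"
      unfolding RR_simps f(3) g(3) g3.mult_gcl[OF f(1) g(1)] g3.mult_gcl[OF g(1) f(1)]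
      by (simp add: mult.commute)
  next
    show "\<one>\<^bsub>RR\<^esub> \<in> carrier RR"
      unfolding RR_simps by (intro gcl_in adm_1 fsupp_1)
  next
    fix x y z assume "x \<in> carrier RR" "y \<in> carrier RR" "z \<in> carrier RR"
    then obtain f g h where f: "adm A f" "x = gcl N f" and g: "adm A g" "y = gcl N g" and h: "adm A h" "z = gcl N h"
      using carrier_rep unfolding RR_simps by metis
    show "x \<otimes>\<^bsub>RR\<^esub> y \<otimes>\<^bsub>RR\<^esub> z = x \<otimes>\<^bsub>RR\<^esub> (y \<otimes>\<^bsub>RR\<^esub> z)"
      unfolding RR_simps f(2) g(2) h(2) g3.mult_gcl[OF f(1) g(1)] g3.mult_gcl[OF g(1) h(1)]
        g3.mult_gcl[OF g3.adm_mult[OF f(1) g(1)] h(1)] g3.mult_gcl[OF f(1) g3.adm_mult[OF g(1) h(1)]]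
      by (simp add: mult.assoc)
  next
    fix x assume "x \<in> carrier RR"
    then obtain f where f: "adm A f" "x = gcl N f"
      using carrier_rep unfolding RR_simps by metis
    show "\<one>\<^bsub>RR\<^esub> \<otimes>\<^bsub>RR\<^esub> x = x"
      unfolding RR_simps f(2) g3.mult_gcl[OF adm_1 f(1)] by simp
  qed
next
  fix x y z assume "x \<in> carrier RR" "y \<in> carrier RR" "z \<in> carrier RR"
  then obtain f g h where f: "adm A f" "x = gcl N f" and g: "adm A g" "y = gcl N g" and h: "adm A h" "z = gcl N h"
    using carrier_rep unfolding RR_simps by metis
  show "(x \<oplus>\<^bsub>RR\<^esub> y) \<otimes>\<^bsub>RR\<^esub> z = x \<otimes>\<^bsub>RR\<^esub> z \<oplus>\<^bsub>RR\<^esub> y \<otimes>\<^bsub>RR\<^esub> z"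
    unfolding RR_simps f(2) g(2) h(2) add_gcl g3.mult_gcl[OF f(1) h(1)] g3.mult_gcl[OF g(1) h(1)]
      g3.mult_gcl[OF adm_add[OF f(1) g(1)] h(1)]
    by (simp add: distrib_right)
qed

end

context mono_setup
begin

abbreviation "AF \<equiv> ideal_pow I"
abbreviation "NF \<equiv> (\<lambda>m. ideal_prod max_ideal (ideal_pow I m))"
abbreviation "AS \<equiv> (\<lambda>m. ideal_colon (ideal_pow I m) max_ideal)"
abbreviation "NS \<equiv> ideal_pow I"

sublocale F: ggrading AF NF
proof unfold_locales
  show "\<And>m. is_ideal (AF m)" by (rule is_ideal_pow)
  show "\<And>m. is_ideal (NF m)" by (rule is_ideal_prod)
  show "\<And>m. NF m \<subseteq> AF m" by (rule mI_sub)
  show "\<And>i j a b. a \<in> AF i \<Longrightarrow> b \<in> AF j \<Longrightarrow> a * b \<in> AF (i + j)" by (rule pow_mult)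
  show "\<And>i j a b. a \<in> AF i \<Longrightarrow> b \<in> NF j \<Longrightarrow> a * b \<in> NF (i + j)"
    by (metis mI_mult add.commute mult.commute)
  show "1 \<in> AF 0" by simp
qed

sublocale S: grading AS NS
proof unfold_locales
  show "\<And>m. is_ideal (AS m)" by (rule is_ideal_colon[OF is_ideal_pow])
  show "\<And>m. is_ideal (NS m)" by (rule is_ideal_pow)
  show "\<And>m. NS m \<subseteq> AS m" by (rule pow_sub_colon)
qed

sublocale FS: grading3 AF NF AS NS AS NS
proof unfold_locales
  show "\<And>i j a b. a \<in> AF i \<Longrightarrow> b \<in> AS j \<Longrightarrow> a * b \<in> AS (i + j)" by (rule colon_mult)
  show "\<And>i j a b. a \<in> AF i \<Longrightarrow> b \<in> NS j \<Longrightarrow> a * b \<in> NS (i + j)" by (rule pow_mult)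
  show "\<And>i j a b. a \<in> NF i \<Longrightarrow> b \<in> AS j \<Longrightarrow> a * b \<in> NS (i + j)" by (rule mI_colon_mult)
qed

lemma fiber_RR: "fiber_cone I = F.RR"
  by (simp add: fiber_cone_def F.RR_def Let_def)

lemma F_cring: "cring (fiber_cone I)"
  unfolding fiber_RR by (rule F.RR_cring)

lemma S_simps:
  "carrier (socle_module I) = graded_carrier AS NS"
  "\<And>x y. x \<oplus>\<^bsub>socle_module I\<^esub> y = (\<lambda>m. cadd (x m) (y m))"
  "\<zero>\<^bsub>socle_module I\<^esub> = NS"
  "\<And>r x. r \<odot>\<^bsub>socle_module I\<^esub> x = graded_mult NS r x"
  by (simp_all add: socle_module_def Let_def)

lemma S_abelian: "abelian_group (socle_module I)"
  by (rule S.graded_abelian_group) (simp_all add: S_simps)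

definition Xv :: "('v, 'k) mpoly" where "Xv = monom (Poly_Mapping.single undefined 1)"

lemma X_max: "Xv \<in> max_ideal"
  unfolding max_ideal_def Xv_def by (rule ideal_gen_sub[THEN subsetD]) auto

lemma mult_X: "b \<in> NS m \<Longrightarrow> b * Xv \<in> NF m"
  by (metis mult.commute prod_mem X_max)

definition phi :: "(nat \<Rightarrow> ('v, 'k) mpoly set) \<Rightarrow> nat \<Rightarrow> ('v, 'k) mpoly set" where
  "phi x = gcl NF (gF x * fps_const Xv)"

lemma adm_phi: "adm AS g \<Longrightarrow> adm AF (g * fps_const Xv)"
  using X_max by (auto simp: adm_def ideal_colon_def)

lemma fsupp_phi: "fsupp NS g \<Longrightarrow> fsupp NF (g * fps_const Xv)"
proof -
  assume "fsupp NS g"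
  moreover have "{m. fps_nth (g * fps_const Xv) m \<notin> NF m} \<subseteq> {m. fps_nth g m \<notin> NS m}"
    using mult_X by auto
  ultimately show ?thesis unfolding fsupp_def by (meson finite_subset)
qed

lemma phi_gcl: "adm AS g \<Longrightarrow> phi (gcl NS g) = gcl NF (g * fps_const Xv)"
proof -
  assume g: "adm AS g"
  have "eqv NS (gF (gcl NS g)) g" using S.gF_gcl[OF g] by blast
  then have "eqv NF (gF (gcl NS g) * fps_const Xv) (g * fps_const Xv)"
    unfolding eqv_def using mult_X
    by (simp add: left_diff_distrib[symmetric])
  then show ?thesis unfolding phi_def F.gcl_eq_iff .
qed

lemma phi_carrier: "x \<in> graded_carrier AS NS \<Longrightarrow> phi x \<in> graded_carrier AF NF"
  by (metis S.carrier_rep phi_gcl F.gcl_in adm_phi fsupp_phi)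

lemma phi_inj: "inj_on phi (graded_carrier AS NS)"
proof (rule inj_onI)
  fix x y assume x: "x \<in> graded_carrier AS NS" and y: "y \<in> graded_carrier AS NS" and e: "phi x = phi y"
  obtain f where f: "adm AS f" "x = gcl NS f" using S.carrier_rep[OF x] by metis
  obtain g where g: "adm AS g" "y = gcl NS g" using S.carrier_rep[OF y] by metis
  have "eqv NF (f * fps_const Xv) (g * fps_const Xv)"
    using e by (simp add: f g phi_gcl F.gcl_eq_iff)
  then have h: "(fps_nth f m - fps_nth g m) * Xv \<in> NF m" for m
    by (simp add: eqv_def left_diff_distrib)
  have "fps_nth f m - fps_nth g m \<in> NS m" for m
  proof (rule key_inj)
    show "fps_nth f m - fps_nth g m \<in> AS m"
      using f g ideal_diff[OF S.A_ideal] by (simp add: adm_def)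
    show "(fps_nth f m - fps_nth g m) * monom (Poly_Mapping.single undefined 1) \<in> NF m"
      using h by (simp add: Xv_def)
  qed
  then have "eqv NS f g" by (simp add: eqv_def)
  then show "x = y" by (simp add: f g S.gcl_eq_iff)
qed

end

context mono_setup
begin

lemma F_simps:
  "carrier (fiber_cone I) = graded_carrier AF NF"
  "\<And>x y. x \<otimes>\<^bsub>fiber_cone I\<^esub> y = graded_mult NF x y"
  "\<zero>\<^bsub>fiber_cone I\<^esub> = NF"
  "\<And>x y. x \<oplus>\<^bsub>fiber_cone I\<^esub> y = (\<lambda>m. cadd (x m) (y m))"
  by (simp_all add: fiber_RR F.RR_simps)

lemma S_rep:
  assumes "x \<in> carrier (socle_module I)"
  obtains f where "adm AS f" "fsupp NS f" "x = gcl NS f"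
proof -
  have "x \<in> graded_carrier AS NS" using assms by (simp only: S_simps)
  from S.carrier_rep[OF this] that show thesis by blast
qed

lemma F_rep:
  assumes "x \<in> carrier (fiber_cone I)"
  obtains f where "adm AF f" "fsupp NF f" "x = gcl NF f"
proof -
  have "x \<in> graded_carrier AF NF" using assms by (simp only: F_simps)
  from F.carrier_rep[OF this] that show thesis by blast
qed

lemma phi_add:
  assumes x: "x \<in> carrier (socle_module I)" and y: "y \<in> carrier (socle_module I)"
  shows "phi (x \<oplus>\<^bsub>socle_module I\<^esub> y) = phi x \<oplus>\<^bsub>fiber_cone I\<^esub> phi y"
proof -
  obtain f where f: "adm AS f" "x = gcl NS f" using S_rep[OF x] by blast
  obtain g where g: "adm AS g" "y = gcl NS g" using S_rep[OF y] by blast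
  show ?thesis
    unfolding S_simps F_simps f(2) g(2) S.add_gcl phi_gcl[OF f(1)] phi_gcl[OF g(1)]
      phi_gcl[OF S.adm_add[OF f(1) g(1)]] F.add_gcl
    by (simp add: distrib_right)
qed

lemma smult_gcl:
  assumes "adm AF h" "adm AS f"
  shows "gcl NF h \<odot>\<^bsub>socle_module I\<^esub> gcl NS f = gcl NS (h * f)"
  unfolding S_simps by (rule FS.mult_gcl[OF assms])

lemma phi_smult:
  assumes r: "r \<in> carrier (fiber_cone I)" and x: "x \<in> carrier (socle_module I)"
  shows "phi (r \<odot>\<^bsub>socle_module I\<^esub> x) = r \<otimes>\<^bsub>fiber_cone I\<^esub> phi x"
proof -
  obtain h where h: "adm AF h" "r = gcl NF h" using F_rep[OF r] by blast
  obtain f where f: "adm AS f" "x = gcl NS f" using S_rep[OF x] by blast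
  show ?thesis
    unfolding h(2) f(2) smult_gcl[OF h(1) f(1)] phi_gcl[OF FS.adm_mult[OF h(1) f(1)]]
      phi_gcl[OF f(1)] F_simps F.g3.mult_gcl[OF h(1) adm_phi[OF f(1)]]
    by (simp add: mult.assoc)
qed

lemma smult_closed:
  assumes r: "r \<in> carrier (fiber_cone I)" and x: "x \<in> carrier (socle_module I)"
  shows "r \<odot>\<^bsub>socle_module I\<^esub> x \<in> carrier (socle_module I)"
proof -
  obtain h where h: "adm AF h" "fsupp NF h" "r = gcl NF h" using F_rep[OF r] by blast
  obtain f where f: "adm AS f" "fsupp NS f" "x = gcl NS f" using S_rep[OF x] by blast
  show ?thesis
    unfolding h(3) f(3) smult_gcl[OF h(1) f(1)] S_simps(1)
    by (intro S.gcl_in FS.adm_mult FS.fsupp_mult h f)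
qed

lemma phi_zero: "phi NS = NF"
  using phi_gcl[OF S.adm_0] S.gcl_0 F.gcl_0 by simp

lemma phi_closed: "x \<in> carrier (socle_module I) \<Longrightarrow> phi x \<in> carrier (fiber_cone I)"
  using phi_carrier by (simp add: S_simps F_simps)

lemma phi_neg:
  assumes x: "x \<in> carrier (socle_module I)"
  shows "\<ominus>\<^bsub>fiber_cone I\<^esub> phi x \<in> phi ` carrier (socle_module I)"
proof -
  obtain f where f: "adm AS f" "fsupp NS f" "x = gcl NS f" using S_rep[OF x] by blast
  interpret R: cring "fiber_cone I" by (rule F_cring)
  have c: "gcl NS (- f) \<in> carrier (socle_module I)"
    unfolding S_simps by (intro S.gcl_in S.adm_uminus S.fsupp_uminus f)
  have "\<ominus>\<^bsub>fiber_cone I\<^esub> phi x = phi (gcl NS (- f))"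
  proof (rule R.minus_equality)
    show "phi (gcl NS (- f)) \<oplus>\<^bsub>fiber_cone I\<^esub> phi x = \<zero>\<^bsub>fiber_cone I\<^esub>"
      unfolding F_simps f(3) phi_gcl[OF f(1)] phi_gcl[OF S.adm_uminus[OF f(1)]] F.add_gcl
      by (simp add: F.gcl_0)
    show "phi x \<in> carrier (fiber_cone I)" using x by (rule phi_closed)
    show "phi (gcl NS (- f)) \<in> carrier (fiber_cone I)" using c by (rule phi_closed)
  qed
  then show ?thesis using c by blast
qed

theorem iso_part: "iso_to_ideal (fiber_cone I) (socle_module I)"
  unfolding iso_to_ideal_def
proof (intro exI conjI)
  interpret R: cring "fiber_cone I" by (rule F_cring)
  interpret M: abelian_group "socle_module I" by (rule S_abelian)
  let ?J = "phi ` carrier (socle_module I)"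
  show "ideal ?J (fiber_cone I)"
  proof (rule idealI)
    show "ring (fiber_cone I)" by (rule R.ring_axioms)
    show "subgroup ?J (add_monoid (fiber_cone I))"
    proof (rule subgroup.intro)
      show "?J \<subseteq> carrier (add_monoid (fiber_cone I))" using phi_closed by auto
      have "NS \<in> carrier (socle_module I)"
        using S.gcl_in[OF S.adm_0 S.fsupp_0] S.gcl_0 by (simp add: S_simps)
      then have "phi NS \<in> ?J" by blast
      then show "\<one>\<^bsub>add_monoid (fiber_cone I)\<^esub> \<in> ?J"
        by (simp add: phi_zero F_simps)
    next
      fix a b assume "a \<in> ?J" "b \<in> ?J"
      then obtain x y where "x \<in> carrier (socle_module I)" "y \<in> carrier (socle_module I)" "a = phi x" "b = phi y"
        by blast
      note xy = this
      have c: "x \<oplus>\<^bsub>socle_module I\<^esub> y \<in> carrier (socle_module I)"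
        using M.a_closed[OF xy(1,2)] .
      have "a \<otimes>\<^bsub>add_monoid (fiber_cone I)\<^esub> b = phi (x \<oplus>\<^bsub>socle_module I\<^esub> y)"
        using phi_add[OF xy(1,2)] xy(3,4) by simp
      then show "a \<otimes>\<^bsub>add_monoid (fiber_cone I)\<^esub> b \<in> ?J"
        using c by blast
    next
      fix a assume "a \<in> ?J"
      then obtain x where "x \<in> carrier (socle_module I)" "a = phi x" by blast
      moreover have "inv\<^bsub>add_monoid (fiber_cone I)\<^esub> a = \<ominus>\<^bsub>fiber_cone I\<^esub> a"
        by (simp add: a_inv_def)
      ultimately show "inv\<^bsub>add_monoid (fiber_cone I)\<^esub> a \<in> ?J"
        using phi_neg by simp
    qed
    show l: "\<And>a x. a \<in> ?J \<Longrightarrow> x \<in> carrier (fiber_cone I) \<Longrightarrow> x \<otimes>\<^bsub>fiber_cone I\<^esub> a \<in> ?J"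
    proof -
      fix a r assume "a \<in> ?J" and r: "r \<in> carrier (fiber_cone I)"
      then obtain x where x: "x \<in> carrier (socle_module I)" "a = phi x" by blast
      then have "r \<otimes>\<^bsub>fiber_cone I\<^esub> a = phi (r \<odot>\<^bsub>socle_module I\<^esub> x)"
        using phi_smult[OF r x(1)] by simp
      then show "r \<otimes>\<^bsub>fiber_cone I\<^esub> a \<in> ?J" using smult_closed[OF r x(1)] by blast
    qed
    show "\<And>a x. a \<in> ?J \<Longrightarrow> x \<in> carrier (fiber_cone I) \<Longrightarrow> a \<otimes>\<^bsub>fiber_cone I\<^esub> x \<in> ?J"
    proof -
      fix a r assume a: "a \<in> ?J" and r: "r \<in> carrier (fiber_cone I)"
      have "a \<in> carrier (fiber_cone I)" using a phi_closed by blast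
      then have "a \<otimes>\<^bsub>fiber_cone I\<^esub> r = r \<otimes>\<^bsub>fiber_cone I\<^esub> a" using r R.m_comm by blast
      then show "a \<otimes>\<^bsub>fiber_cone I\<^esub> r \<in> ?J" using l[OF a r] by simp
    qed
  qed
  show "bij_betw phi (carrier (socle_module I)) ?J"
    using phi_inj by (simp add: bij_betw_imageI S_simps)
  show "\<forall>x\<in>carrier (socle_module I). \<forall>y\<in>carrier (socle_module I).
      phi (x \<oplus>\<^bsub>socle_module I\<^esub> y) = phi x \<oplus>\<^bsub>fiber_cone I\<^esub> phi y"
    using phi_add by blast
  show "\<forall>r\<in>carrier (fiber_cone I). \<forall>x\<in>carrier (socle_module I).
      phi (r \<odot>\<^bsub>socle_module I\<^esub> x) = r \<otimes>\<^bsub>fiber_cone I\<^esub> phi x"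
    using phi_smult by blast
qed

end

context mono_setup
begin

lemma socle_monomial:
  assumes "carrier (socle_module I) \<noteq> {\<zero>\<^bsub>socle_module I\<^esub>}"
  obtains m a where "0 < m" "monom a \<in> AS m" "monom a \<notin> NS m"
proof -
  interpret M: abelian_group "socle_module I" by (rule S_abelian)
  have "\<exists>x. x \<in> carrier (socle_module I) \<and> x \<noteq> \<zero>\<^bsub>socle_module I\<^esub>"
  proof (rule ccontr)
    assume "\<not> ?thesis"
    then have "carrier (socle_module I) \<subseteq> {\<zero>\<^bsub>socle_module I\<^esub>}" by blast
    then show False using assms M.zero_closed by blast
  qed
  then obtain x where x: "x \<in> carrier (socle_module I)" "x \<noteq> NS"
    unfolding S_simps(3) by blast
  obtain f where f: "adm AS f" "fsupp NS f" "x = gcl NS f" using S_rep[OF x(1)] by blast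
  have "gcl NS f \<noteq> gcl NS 0"
    using x(2) f(3) unfolding S.gcl_0 by simp
  then have "\<not> eqv NS f 0"
    unfolding S.gcl_eq_iff .
  then obtain m where m: "fps_nth f m \<notin> NS m" by (auto simp: eqv_def)
  have fm: "fps_nth f m \<in> AS m" using f(1) by (simp add: adm_def)
  have "fps_nth f m \<notin> Mset (NS m)" using m Mset_sub[OF is_ideal_pow] by blast
  then obtain c where c: "c \<in> Poly_Mapping.keys (fps_nth f m)" "monom c \<notin> NS m"
    by (auto simp: Mset_def)
  have "monom c \<in> AS m" by (rule colon_monom[OF is_ideal_pow Mpow fm c(1)])
  moreover have "m \<noteq> 0" using c(2) by (cases m) auto
  ultimately show ?thesis using that c(2) by blast
qed

definition g0 :: "nat \<Rightarrow> ('v \<Rightarrow>\<^sub>0 nat) \<Rightarrow> ('v, 'k) mpoly fps" where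
  "g0 m a = fps_const (monom a) * fps_X ^ m"

lemma g0_nth: "fps_nth (g0 m a) n = (if n = m then monom a else 0)"
  unfolding g0_def fps_X_power_mult_right_nth by auto

lemma mult_g0_nth: "fps_nth (h * g0 m a) (i + m) = fps_nth h i * monom a"
proof -
  have "h * g0 m a = (h * fps_const (monom a)) * fps_X ^ m"
    by (simp add: g0_def mult.assoc)
  then show ?thesis by (simp add: fps_X_power_mult_right_nth)
qed

lemma g0_carrier:
  assumes "monom a \<in> AS m"
  shows "gcl NS (g0 m a) \<in> carrier (socle_module I)" "adm AS (g0 m a)"
proof -
  show ad: "adm AS (g0 m a)"
    using assms is_idealD(1)[OF S.A_ideal] by (simp add: adm_def g0_nth)
  have "{n. fps_nth (g0 m a) n \<notin> NS n} \<subseteq> {m}"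
    using is_idealD(1)[OF is_ideal_pow] by (auto simp: g0_nth)
  then have "fsupp NS (g0 m a)" unfolding fsupp_def by (meson finite.simps finite_subset)
  then show "gcl NS (g0 m a) \<in> carrier (socle_module I)"
    unfolding S_simps by (intro S.gcl_in ad)
qed

lemma torsion_free:
  assumes m: "0 < m" and a: "monom a \<in> AS m" "monom a \<notin> NS m"
    and r: "r \<in> carrier (fiber_cone I)"
    and z: "r \<odot>\<^bsub>socle_module I\<^esub> gcl NS (g0 m a) = \<zero>\<^bsub>socle_module I\<^esub>"
  shows "r = \<zero>\<^bsub>fiber_cone I\<^esub>"
proof -
  obtain h where h: "adm AF h" "fsupp NF h" "r = gcl NF h" using F_rep[OF r] by blast
  have "gcl NS (h * g0 m a) = gcl NS 0"
    using z unfolding h(3) smult_gcl[OF h(1) g0_carrier(2)[OF a(1)]] S_simps(3) S.gcl_0 .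
  then have e: "eqv NS (h * g0 m a) 0" by (simp add: S.gcl_eq_iff)
  have "fps_nth h i \<in> NF i" for i
  proof (rule key_rank[OF m a])
    show "fps_nth h i \<in> ideal_pow I i" using h(1) by (simp add: adm_def)
    show "fps_nth h i * monom a \<in> ideal_pow I (i + m)"
      using e mult_g0_nth[of h m a i] unfolding eqv_def by (metis diff_zero fps_zero_nth)
  qed
  then have "eqv NF h 0" by (simp add: eqv_def)
  then have "gcl NF h = gcl NF 0" unfolding F.gcl_eq_iff .
  then show ?thesis unfolding h(3) F_simps(3) F.gcl_0 .
qed

end

context mono_setup
begin

lemma zero_smult:
  assumes z: "z \<in> carrier (socle_module I)"
  shows "\<zero>\<^bsub>fiber_cone I\<^esub> \<odot>\<^bsub>socle_module I\<^esub> z = \<zero>\<^bsub>socle_module I\<^esub>"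
proof -
  obtain g where g: "adm AS g" "z = gcl NS g" using S_rep[OF z] by blast
  have "\<zero>\<^bsub>fiber_cone I\<^esub> = gcl NF 0" unfolding F_simps(3) F.gcl_0 ..
  then have "\<zero>\<^bsub>fiber_cone I\<^esub> \<odot>\<^bsub>socle_module I\<^esub> z = gcl NS (0 * g)"
    using smult_gcl[OF F.adm_0 g(1)] g(2) by simp
  also have "\<dots> = \<zero>\<^bsub>socle_module I\<^esub>" unfolding S_simps(3) by (simp add: S.gcl_0)
  finally show ?thesis .
qed

lemma phi_zero': "phi \<zero>\<^bsub>socle_module I\<^esub> = \<zero>\<^bsub>fiber_cone I\<^esub>"
  unfolding S_simps(3) F_simps(3) by (rule phi_zero)

lemma phi_inj': "inj_on phi (carrier (socle_module I))"
  unfolding S_simps(1) by (rule phi_inj)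

lemma indep_one:
  assumes "carrier (socle_module I) \<noteq> {\<zero>\<^bsub>socle_module I\<^esub>}"
  shows "\<exists>B. lin_indep (fiber_cone I) (socle_module I) B \<and> card B = 1"
proof -
  interpret M: abelian_group "socle_module I" by (rule S_abelian)
  obtain m a where m: "0 < m" "monom a \<in> AS m" "monom a \<notin> NS m"
    using socle_monomial[OF assms] by blast
  let ?x = "gcl NS (g0 m a)"
  have xc: "?x \<in> carrier (socle_module I)" by (rule g0_carrier(1)[OF m(2)])
  have "lin_indep (fiber_cone I) (socle_module I) {?x}"
    unfolding lin_indep_def
  proof (intro conjI ballI impI)
    show "finite {?x}" by simp
    show "{?x} \<subseteq> carrier (socle_module I)" using xc by simp
  next
    fix c y assume c: "c \<in> {?x} \<rightarrow> carrier (fiber_cone I)"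
      and s: "finsum (socle_module I) (\<lambda>x. c x \<odot>\<^bsub>socle_module I\<^esub> x) {?x} = \<zero>\<^bsub>socle_module I\<^esub>"
      and y: "y \<in> {?x}"
    have cx: "c ?x \<in> carrier (fiber_cone I)" using c by blast
    have sc: "c ?x \<odot>\<^bsub>socle_module I\<^esub> ?x \<in> carrier (socle_module I)" by (rule smult_closed[OF cx xc])
    have "finsum (socle_module I) (\<lambda>x. c x \<odot>\<^bsub>socle_module I\<^esub> x) {?x}
        = c ?x \<odot>\<^bsub>socle_module I\<^esub> ?x \<oplus>\<^bsub>socle_module I\<^esub> finsum (socle_module I) (\<lambda>x. c x \<odot>\<^bsub>socle_module I\<^esub> x) {}"
      by (rule M.finsum_insert) (use sc in auto)
    also have "\<dots> = c ?x \<odot>\<^bsub>socle_module I\<^esub> ?x" using sc by simp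
    finally have "c ?x \<odot>\<^bsub>socle_module I\<^esub> ?x = \<zero>\<^bsub>socle_module I\<^esub>" using s by simp
    then have "c ?x = \<zero>\<^bsub>fiber_cone I\<^esub>" by (rule torsion_free[OF m cx])
    then show "c y = \<zero>\<^bsub>fiber_cone I\<^esub>" using y by simp
  qed
  then show ?thesis by (intro exI[of _ "{?x}"]) simp
qed

lemma indep_le1:
  assumes B: "lin_indep (fiber_cone I) (socle_module I) B"
  shows "card B \<le> 1"
proof (rule ccontr)
  interpret R: cring "fiber_cone I" by (rule F_cring)
  interpret M: abelian_group "socle_module I" by (rule S_abelian)
  assume "\<not> card B \<le> 1"
  then have cB: "2 \<le> card B" by simp
  have finB: "finite B" and subB: "B \<subseteq> carrier (socle_module I)"
    using B by (auto simp: lin_indep_def)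
  have "B \<noteq> {}" using cB by (metis card.empty not_numeral_le_zero)
  then obtain x where x: "x \<in> B" by blast
  have "card (B - {x}) \<ge> 1" using cB x finB by simp
  then have "B - {x} \<noteq> {}" by (metis card.empty not_one_le_zero)
  then obtain y where y: "y \<in> B" "y \<noteq> x" by blast
  have xc: "x \<in> carrier (socle_module I)" and yc: "y \<in> carrier (socle_module I)" using x y subB by auto
  have px: "phi x \<in> carrier (fiber_cone I)" and py: "phi y \<in> carrier (fiber_cone I)"
    using xc yc phi_closed by auto
  define c where "c z = (if z = x then phi y else if z = y then \<ominus>\<^bsub>fiber_cone I\<^esub> phi x else \<zero>\<^bsub>fiber_cone I\<^esub>)" for z
  have cc: "c \<in> B \<rightarrow> carrier (fiber_cone I)"
  proof (rule Pi_I)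
    fix z show "c z \<in> carrier (fiber_cone I)"
      unfolding c_def using px py R.a_inv_closed[OF px] R.zero_closed by (cases "z = x"; cases "z = y") auto
  qed
  define f where "f z = c z \<odot>\<^bsub>socle_module I\<^esub> z" for z
  have fc: "f \<in> B \<rightarrow> carrier (socle_module I)"
  proof (rule Pi_I)
    fix z assume z: "z \<in> B"
    have "c z \<in> carrier (fiber_cone I)" using cc z by (rule funcset_mem)
    moreover have "z \<in> carrier (socle_module I)" using subB z by blast
    ultimately show "f z \<in> carrier (socle_module I)" unfolding f_def by (rule smult_closed)
  qed
  define B' where "B' = B - {x, y}"
  have BB: "B = insert x (insert y B')" using x y by (auto simp: B'_def)
  have fin': "finite B'" using finB by (simp add: B'_def)
  have z': "finsum (socle_module I) f B' = \<zero>\<^bsub>socle_module I\<^esub>"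
  proof (rule M.add.finprod_one_eqI)
    fix z assume "z \<in> B'"
    then have "c z = \<zero>\<^bsub>fiber_cone I\<^esub>" "z \<in> carrier (socle_module I)" using subB by (auto simp: B'_def c_def)
    then show "f z = \<zero>\<^bsub>socle_module I\<^esub>" by (simp add: f_def zero_smult)
  qed
  have fB'c: "f \<in> B' \<rightarrow> carrier (socle_module I)" using fc by (auto simp: B'_def)
  have fxc: "f x \<in> carrier (socle_module I)" and fyc: "f y \<in> carrier (socle_module I)" using fc x y by auto
  have "finsum (socle_module I) f B = f x \<oplus>\<^bsub>socle_module I\<^esub> (f y \<oplus>\<^bsub>socle_module I\<^esub> finsum (socle_module I) f B')"
  proof -
    have fyB: "f \<in> insert y B' \<rightarrow> carrier (socle_module I)" using fB'c fyc by blast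
    have "finsum (socle_module I) f (insert y B') = f y \<oplus>\<^bsub>socle_module I\<^esub> finsum (socle_module I) f B'"
      by (rule M.finsum_insert) (use fin' fB'c fyc in \<open>auto simp: B'_def\<close>)
    moreover have "finsum (socle_module I) f (insert x (insert y B')) = f x \<oplus>\<^bsub>socle_module I\<^esub> finsum (socle_module I) f (insert y B')"
      by (rule M.finsum_insert) (use fin' y(2) fyB fxc in \<open>auto simp: B'_def\<close>)
    ultimately show ?thesis unfolding BB by simp
  qed
  also have "\<dots> = f x \<oplus>\<^bsub>socle_module I\<^esub> f y" using z' fyc by simp
  also have "\<dots> = \<zero>\<^bsub>socle_module I\<^esub>"
  proof (rule inj_onD[OF phi_inj'])
    have "phi (f x \<oplus>\<^bsub>socle_module I\<^esub> f y) = phi (f x) \<oplus>\<^bsub>fiber_cone I\<^esub> phi (f y)"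
      by (rule phi_add[OF fxc fyc])
    also have "\<dots> = phi y \<otimes>\<^bsub>fiber_cone I\<^esub> phi x \<oplus>\<^bsub>fiber_cone I\<^esub> (\<ominus>\<^bsub>fiber_cone I\<^esub> phi x) \<otimes>\<^bsub>fiber_cone I\<^esub> phi y"
    proof -
      have "f x = phi y \<odot>\<^bsub>socle_module I\<^esub> x" by (simp add: f_def c_def)
      moreover have "f y = (\<ominus>\<^bsub>fiber_cone I\<^esub> phi x) \<odot>\<^bsub>socle_module I\<^esub> y" using y(2) by (simp add: f_def c_def)
      ultimately show ?thesis using phi_smult[OF py xc] phi_smult[OF R.a_inv_closed[OF px] yc] by simp
    qed
    also have "\<dots> = \<zero>\<^bsub>fiber_cone I\<^esub>"
    proof -
      have "(\<ominus>\<^bsub>fiber_cone I\<^esub> phi x) \<otimes>\<^bsub>fiber_cone I\<^esub> phi y = \<ominus>\<^bsub>fiber_cone I\<^esub> (phi x \<otimes>\<^bsub>fiber_cone I\<^esub> phi y)"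
        by (rule R.l_minus[OF px py])
      moreover have "phi y \<otimes>\<^bsub>fiber_cone I\<^esub> phi x = phi x \<otimes>\<^bsub>fiber_cone I\<^esub> phi y"
        by (rule R.m_comm[OF py px])
      moreover have "phi x \<otimes>\<^bsub>fiber_cone I\<^esub> phi y \<in> carrier (fiber_cone I)" by (rule R.m_closed[OF px py])
      ultimately show ?thesis by (simp add: R.r_neg)
    qed
    also have "\<dots> = phi \<zero>\<^bsub>socle_module I\<^esub>" by (simp add: phi_zero')
    finally show "phi (f x \<oplus>\<^bsub>socle_module I\<^esub> f y) = phi \<zero>\<^bsub>socle_module I\<^esub>" .
    show "f x \<oplus>\<^bsub>socle_module I\<^esub> f y \<in> carrier (socle_module I)" using fxc fyc by simp
    show "\<zero>\<^bsub>socle_module I\<^esub> \<in> carrier (socle_module I)" by simp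
  qed
  finally have "finsum (socle_module I) f B = \<zero>\<^bsub>socle_module I\<^esub>" .
  moreover have "f = (\<lambda>z. c z \<odot>\<^bsub>socle_module I\<^esub> z)" by (rule ext) (simp add: f_def)
  ultimately have "finsum (socle_module I) (\<lambda>z. c z \<odot>\<^bsub>socle_module I\<^esub> z) B = \<zero>\<^bsub>socle_module I\<^esub>"
    by simp
  moreover have "\<forall>c\<in>B \<rightarrow> carrier (fiber_cone I).
        finsum (socle_module I) (\<lambda>z. c z \<odot>\<^bsub>socle_module I\<^esub> z) B = \<zero>\<^bsub>socle_module I\<^esub> \<longrightarrow>
        (\<forall>z\<in>B. c z = \<zero>\<^bsub>fiber_cone I\<^esub>)"
    using B unfolding lin_indep_def by blast
  ultimately have allz: "\<forall>z\<in>B. c z = \<zero>\<^bsub>fiber_cone I\<^esub>" using cc by blast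
  have "c x = phi y" "c y = \<ominus>\<^bsub>fiber_cone I\<^esub> phi x" using y(2) by (simp_all add: c_def)
  then have "phi y = \<zero>\<^bsub>fiber_cone I\<^esub>" "\<ominus>\<^bsub>fiber_cone I\<^esub> phi x = \<zero>\<^bsub>fiber_cone I\<^esub>"
    using allz x y(1) by auto
  then have "phi x = phi y" by (metis R.minus_minus R.minus_zero px)
  then show False using inj_onD[OF phi_inj' _ xc yc] y(2) by auto
qed

lemma rank_part:
  assumes "carrier (socle_module I) \<noteq> {\<zero>\<^bsub>socle_module I\<^esub>}"
  shows "module_rank (fiber_cone I) (socle_module I) = 1"
  unfolding module_rank_def
proof (rule Greatest_equality)
  show "\<exists>B. lin_indep (fiber_cone I) (socle_module I) B \<and> card B = 1" by (rule indep_one[OF assms])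
  show "\<And>k. \<exists>B. lin_indep (fiber_cone I) (socle_module I) B \<and> card B = k \<Longrightarrow> k \<le> 1"
    using indep_le1 by blast
qed

end

theorem proposition1p3:
  fixes I :: "('v::finite, 'k::field) mpoly set" and d :: nat
  assumes "monomial_ideal_gen_in_degree I d"
    and "\<forall>m::nat. m > 0 \<longrightarrow> (\<forall>a. monom a \<in> ideal_colon (ideal_pow I m) max_ideal - ideal_pow I m
            \<longrightarrow> int (mdeg a) = int m * int d - 1)"
  shows "iso_to_ideal (fiber_cone I) (socle_module I)
     \<and> (carrier (socle_module I) \<noteq> {\<zero>\<^bsub>socle_module I\<^esub>}
          \<longrightarrow> module_rank (fiber_cone I) (socle_module I) = 1)"
proof -
  obtain G where G: "\<forall>a\<in>G. mdeg a = d" "I = ideal_gen (monom ` G)"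
    using assms(1) unfolding monomial_ideal_gen_in_degree_def by blast
  interpret mono_setup I G d
    by unfold_locales (use G assms(2) in auto)
  show ?thesis using iso_part rank_part by blast
qed

end
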